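(* Let $\mathcal{X}\subseteq\mathbb{R}^d$ be closed and convex, $\mu,\sigma,\delta>0$. Let $h:\mathcal{X}\to\mathbb{R}$ be continuously differentiable with $D_h(x,y)\ge\frac\sigma2\|x-y\|^2$ for all $x,y$, and let $f:\mathcal{X}\to\mathbb{R}$ be differentiable and $\mu$-uniformly convex with respect to $h$ (i.e. $D_f(x,y)\ge\mu D_h(x,y)$ for all $x,y$), with minimizer $x^\ast$. Let $(A_k)_{k\ge0}$ be a nondecreasing sequence of positive numbers, $\alpha_k=A_{k+1}-A_k$, $\tau_k=\alpha_k/A_k$, and $E_k=A_k\big(\mu D_h(x^\ast,z_k)+f(x_k)-f(x^\ast)\big)$. Suppose sequences $(x_k),(z_k)$ in $\mathcal{X}$ satisfy, for all $k$, $$x_{k+1}=\frac{\tau_k}{1+\tau_k}z_k+\frac1{1+\tau_k}x_k,\qquad \nabla h(z_{k+1})=\nabla h(z_k)+\tau_k\Big(\nabla h(x_{k+1})-\nabla h(z_{k+1})-\frac1\mu\nabla f(x_{k+1})\Big).$$ Then $$\frac{E_{k+1}-E_k}{\delta}\le\frac{A_k\tau_k^2}{2\mu\sigma\delta}\|\nabla f(x_{k+1})\|^2.$$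
   Context: $\|\cdot\|$ is the Euclidean norm; for differentiable $g$, $D_g(y,x)=g(y)-g(x)-\langle\nabla g(x),y-x\rangle$. *)

theory Defs
  imports "HOL-Analysis.Analysis"
begin

definition bregman :: "('a::real_inner \<Rightarrow> real) \<Rightarrow> ('a \<Rightarrow> 'a) \<Rightarrow> 'a \<Rightarrow> 'a \<Rightarrow> real" where
  "bregman g dg y x = g y - g x - inner (dg x) (y - x)"

end

theory Submission
  imports Defs
begin

lemma key:
  fixes a al \<mu> \<sigma> G t Dsz Dsz' Dsx' Dzz Dzx I1 I2 Ig fx fx' fs p q r s :: real
  assumes T1: "Dsz' - Dsz = - Dzz + I1" and T2: "Dsz' - Dsx' = - Dzx + I2"
    and Z: "a * I1 = - al * I2 + al / \<mu> * Ig" and sp: "Ig = p + q + r"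
    and F1: "fs - fx' - p \<ge> \<mu> * Dsx'" and X: "al * q = a * s" and F2: "fx - fx' - s \<ge> 0"
    and CS: "r \<le> G * t" and Hz: "Dzz \<ge> \<sigma> / 2 * t\<^sup>2" and Hx: "Dzx \<ge> 0"
    and a: "a > 0" and al: "al \<ge> 0" and mu: "\<mu> > 0" and sg: "\<sigma> > 0"
  shows "(a + al) * (\<mu> * Dsz' + fx' - fs) - a * (\<mu> * Dsz + fx - fs) \<le> a * (al / a)\<^sup>2 / (2 * \<mu> * \<sigma>) * G\<^sup>2"
proof -
  have zz: "\<mu> * (a * I1) = - \<mu> * al * I2 + al * Ig" using Z mu by (simp add: field_simps)
  have lhs: "(a + al) * (\<mu> * Dsz' + fx' - fs) - a * (\<mu> * Dsz + fx - fs)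
     = - a * \<mu> * Dzz + al * \<mu> * Dsx' - al * \<mu> * Dzx + al * Ig + (a+al)*(fx' - fs) - a*(fx - fs)"
  proof -
    have d1: "Dsz' = Dsz - Dzz + I1" and d2: "Dsz' = Dsx' - Dzx + I2" using T1 T2 by auto
    have e1: "a * (\<mu> * Dsz') = a*\<mu>*(Dsz - Dzz) + \<mu>*(a*I1)"
      by (subst d1) (simp add: algebra_simps)
    have e2: "al * (\<mu> * Dsz') = al*\<mu>*(Dsx' - Dzx + I2)"
      by (subst d2) (simp add: algebra_simps)
    from e1 e2 have "(a + al) * (\<mu> * Dsz') = a*\<mu>*(Dsz - Dzz) + \<mu>*(a*I1) + al*\<mu>*(Dsx' - Dzx + I2)"
      by (simp add: distrib_right)
    thus ?thesis using zz by (simp add: algebra_simps)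
  qed
  have "al * Ig \<le> al * (fs - fx') - al * \<mu> * Dsx' + a * (fx - fx') + al * (G * t)"
  proof -
    have "al * p \<le> al * (fs - fx' - \<mu> * Dsx')" using F1 al by (intro mult_left_mono) auto
    moreover have "a * s \<le> a * (fx - fx')" using F2 a by (intro mult_left_mono) auto
    moreover have "al * r \<le> al * (G * t)" using CS al by (intro mult_left_mono) auto
    ultimately show ?thesis using sp X by (simp add: algebra_simps)
  qed
  hence "(a + al) * (\<mu> * Dsz' + fx' - fs) - a * (\<mu> * Dsz + fx - fs) \<le> - a * \<mu> * Dzz + al * (G * t)"
  proof -
    have n: "0 \<le> Dzx * (\<mu> * al)" using Hx mu al by simp
    show ?thesis using lhs n \<open>al * Ig \<le> _\<close> by (simp add: algebra_simps)
  qed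
  also have "\<dots> \<le> - a * \<mu> * (\<sigma> / 2 * t\<^sup>2) + al * (G * t)"
    using Hz a mu by (simp add: mult_left_mono)
  also have "\<dots> \<le> a * (al / a)\<^sup>2 / (2 * \<mu> * \<sigma>) * G\<^sup>2"
  proof -
    have "0 \<le> (a*\<mu>*\<sigma>*t - al*G)\<^sup>2" by simp
    hence "2*a*\<mu>*\<sigma>*(- a * \<mu> * (\<sigma> / 2 * t\<^sup>2) + al * (G * t)) \<le> al\<^sup>2 * G\<^sup>2"
      by (simp add: power2_eq_square algebra_simps)
    moreover have "a * (al / a)\<^sup>2 / (2 * \<mu> * \<sigma>) * G\<^sup>2 = al\<^sup>2 * G\<^sup>2 / (2*a*\<mu>*\<sigma>)"
      using a by (simp add: power2_eq_square field_simps)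
    moreover have "2*a*\<mu>*\<sigma> > 0" using a mu sg by simp
    ultimately show ?thesis by (simp add: pos_le_divide_eq mult.commute)
  qed
  finally show ?thesis .
qed
theorem proposition8:
  fixes X :: "(real ^ 'd) set"
    and h f :: "real ^ 'd \<Rightarrow> real"
    and gh gf :: "real ^ 'd \<Rightarrow> real ^ 'd"
    and \<mu> \<sigma> \<delta> :: real
    and xstar :: "real ^ 'd"
    and A :: "nat \<Rightarrow> real"
    and x z :: "nat \<Rightarrow> real ^ 'd"
  assumes X_closed: "closed X" and X_convex: "convex X"
    and \<mu>_pos: "\<mu> > 0" and \<sigma>_pos: "\<sigma> > 0" and \<delta>_pos: "\<delta> > 0"
    and h_grad: "\<And>y. y \<in> X \<Longrightarrow> (h has_derivative (\<lambda>v. inner (gh y) v)) (at y within X)"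
    and h_C1: "continuous_on X gh"
    and h_strong: "\<And>a b. a \<in> X \<Longrightarrow> b \<in> X \<Longrightarrow> bregman h gh a b \<ge> \<sigma> / 2 * (norm (a - b))\<^sup>2"
    and f_grad: "\<And>y. y \<in> X \<Longrightarrow> (f has_derivative (\<lambda>v. inner (gf y) v)) (at y within X)"
    and f_unif: "\<And>a b. a \<in> X \<Longrightarrow> b \<in> X \<Longrightarrow> bregman f gf a b \<ge> \<mu> * bregman h gh a b"
    and xstar_in: "xstar \<in> X"
    and xstar_min: "\<And>y. y \<in> X \<Longrightarrow> f xstar \<le> f y"
    and A_pos: "\<And>k. A k > 0"
    and A_mono: "mono A"
    and x_in: "\<And>k. x k \<in> X" and z_in: "\<And>k. z k \<in> X"
    and x_step: "\<And>k. x (Suc k) =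
        ((A (Suc k) - A k) / A k / (1 + (A (Suc k) - A k) / A k)) *\<^sub>R z k
        + (1 / (1 + (A (Suc k) - A k) / A k)) *\<^sub>R x k"
    and z_step: "\<And>k. gh (z (Suc k)) = gh (z k) + ((A (Suc k) - A k) / A k) *\<^sub>R
        (gh (x (Suc k)) - gh (z (Suc k)) - (1 / \<mu>) *\<^sub>R gf (x (Suc k)))"
  shows "\<And>k. (let \<tau> = (A (Suc k) - A k) / A k;
              E = (\<lambda>j. A j * (\<mu> * bregman h gh xstar (z j) + f (x j) - f xstar))
          in (E (Suc k) - E k) / \<delta> \<le> A k * \<tau>\<^sup>2 / (2 * \<mu> * \<sigma> * \<delta>) * (norm (gf (x (Suc k))))\<^sup>2)"
proof -
  fix k
  define a where "a = A k"
  define a' where "a' = A (Suc k)"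
  define al where "al = a' - a"
  define g where "g = gf (x (Suc k))"
  define x' where "x' = x (Suc k)"
  define z' where "z' = z (Suc k)"
  define w where "w = xstar - z'"
  have a: "a > 0" and a': "a' > 0" using A_pos unfolding a_def a'_def by auto
  have al: "al \<ge> 0" using A_mono unfolding al_def a_def a'_def by (simp add: mono_def)
  have tau: "(A (Suc k) - A k) / A k = al / a" unfolding al_def a_def a'_def by simp
  have c1: "al / a / (1 + al / a) = al / a'" using a a' unfolding al_def by (simp add: field_simps)
  have c2: "1 / (1 + al / a) = a / a'" using a a' unfolding al_def by (simp add: field_simps)
  have xs: "x' = (al / a') *\<^sub>R z k + (a / a') *\<^sub>R x k"
    using x_step[of k] unfolding x'_def tau c1 c2 .
  have "a' *\<^sub>R x' = al *\<^sub>R z k + a *\<^sub>R x k" using a' unfolding xs by (simp add: scaleR_add_right)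
  hence xv: "al *\<^sub>R (x' - z k) = a *\<^sub>R (x k - x')"
    unfolding al_def by (simp add: algebra_simps)
  have X: "al * inner g (x' - z k) = a * inner g (x k - x')"
    using arg_cong[OF xv, of "inner g"] by simp
  have zs: "gh (z k) - gh z' = - (al / a) *\<^sub>R (gh x' - gh z' - (1 / \<mu>) *\<^sub>R g)"
    using z_step[of k] unfolding tau z'_def x'_def g_def by (simp add: algebra_simps)
  have "inner (gh (z k) - gh z') w = - (al / a) * (inner (gh x' - gh z') w - (1/\<mu>) * inner g w)"
    unfolding zs by (simp add: inner_diff_left)
  hence Z: "a * inner (gh (z k) - gh z') w = - al * inner (gh x' - gh z') w + al / \<mu> * inner g w"
    using a by (simp add: field_simps)
  have T1: "bregman h gh xstar z' - bregman h gh xstar (z k) = - bregman h gh z' (z k) + inner (gh (z k) - gh z') w"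
    unfolding bregman_def w_def by (simp add: inner_diff_left inner_diff_right algebra_simps)
  have T2: "bregman h gh xstar z' - bregman h gh xstar x' = - bregman h gh z' x' + inner (gh x' - gh z') w"
    unfolding bregman_def w_def by (simp add: inner_diff_left inner_diff_right algebra_simps)
  have sp: "inner g w = inner g (xstar - x') + inner g (x' - z k) + inner g (z k - z')"
    unfolding w_def by (simp add: inner_diff_right)
  have F1: "f xstar - f x' - inner g (xstar - x') \<ge> \<mu> * bregman h gh xstar x'"
    using f_unif[OF xstar_in x_in[of "Suc k"]] unfolding bregman_def[of f] g_def x'_def by simp
  have nn: "\<sigma> / 2 * (norm (u - v))\<^sup>2 \<ge> 0" for u v :: "real ^ 'd" using \<sigma>_pos by simp
  have "bregman h gh (x k) x' \<ge> 0"
    using h_strong[OF x_in[of k] x_in[of "Suc k"]] nn[of "x k" x'] unfolding x'_def by linarith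
  hence "\<mu> * bregman h gh (x k) x' \<ge> 0" using \<mu>_pos by simp
  hence "bregman f gf (x k) x' \<ge> 0"
    using f_unif[OF x_in[of k] x_in[of "Suc k"]] unfolding x'_def by linarith
  hence F2: "f (x k) - f x' - inner g (x k - x') \<ge> 0"
    unfolding bregman_def g_def x'_def by simp
  have CS: "inner g (z k - z') \<le> norm g * norm (z' - z k)"
    using norm_cauchy_schwarz[of g "z k - z'"] by (simp add: norm_minus_commute)
  have Hz: "bregman h gh z' (z k) \<ge> \<sigma> / 2 * (norm (z' - z k))\<^sup>2"
    using h_strong[OF z_in[of "Suc k"] z_in[of k]] unfolding z'_def by blast
  have Hx: "bregman h gh z' x' \<ge> 0"
    using h_strong[OF z_in[of "Suc k"] x_in[of "Suc k"]] nn[of z' x'] unfolding z'_def x'_def by linarith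
  have K: "(a + al) * (\<mu> * bregman h gh xstar z' + f x' - f xstar) - a * (\<mu> * bregman h gh xstar (z k) + f (x k) - f xstar)
     \<le> a * (al / a)\<^sup>2 / (2 * \<mu> * \<sigma>) * (norm g)\<^sup>2"
    by (rule key[OF T1 T2 Z sp F1 X F2 CS Hz Hx a al \<mu>_pos \<sigma>_pos])
  have aa: "a + al = A (Suc k)" unfolding al_def a_def a'_def by simp
  have "(A (Suc k) * (\<mu> * bregman h gh xstar (z (Suc k)) + f (x (Suc k)) - f xstar)
          - a * (\<mu> * bregman h gh xstar (z k) + f (x k) - f xstar)) / \<delta>
        \<le> (a * (al / a)\<^sup>2 / (2 * \<mu> * \<sigma>) * (norm g)\<^sup>2) / \<delta>"
    using \<delta>_pos by (intro divide_right_mono[OF K[unfolded aa z'_def x'_def]]) simp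
  also have "\<dots> = A k * ((A (Suc k) - A k) / A k)\<^sup>2 / (2 * \<mu> * \<sigma> * \<delta>) * (norm (gf (x (Suc k))))\<^sup>2"
    unfolding tau g_def a_def by simp
  finally show "?thesis k" unfolding a_def by (simp add: Let_def)
qed

end
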